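(* For all relational types $R,R'$, terms $t_1,t_2$ and environment $\gamma$: $t_1\,\llbracket R\Rightarrow R'\rrbracket_\gamma\,t_2$ holds iff for all $(x,x')\in\llbracket R\rrbracket_\gamma$, $t_1\,\llbracket R'\rrbracket_\gamma\,t_2$.
   Context: Terms are those of the pure untyped $\lambda$-calculus, up to $\alpha$-equivalence; $=_{\beta\eta}$ is $\beta\eta$-convertibility. Relational types: $R ::= X \mid R\to R' \mid \forall X.R \mid R^{\cup} \mid R\cdot R' \mid t$ (last form: promotion of a term). A relation on terms is $\beta\eta$-closed if closed under replacing either related term by a $\beta\eta$-equal one; $\mathcal{R}$ is the set of such relations; environments $\gamma$ map finitely many type variables to $\mathcal{R}$. Interpretation: $\llbracket X\rrbracket_\gamma=\gamma(X)$; $t\,\llbracket R\to R'\rrbracket_\gamma\,t'$ iff for all $a,a'$ with $a\,\llbracket R\rrbracket_\gamma\,a'$, $t\,a\,\llbracket R'\rrbracket_\gamma\,t'\,a'$; $\llbracket \forall X.R\rrbracket_\gamma=\bigcap_{r\in\mathcal{R}}\llbracket R\rrbracket_{\gamma[X\mapsto r]}$; $t\,\llbracket R^\cup\rrbracket_\gamma\,t'$ iff $t'\,\llbracket R\rrbracket_\gamma\,t$; $t\,\llbracket R\cdot R'\rrbracket_\gamma\,t'$ iff $\exists t''$, $t\,\llbracket R\rrbracket_\gamma\,t''$ and $t''\,\llbracket R'\rrbracket_\gamma\,t'$; $\llbracket \hat t\rrbracket_\gamma=\{(t,t')\mid \hat t\,t=_{\beta\eta}t'\}$. Let $K:=\lambda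 x.\lambda y.x$, $t\bullet R:=t\cdot R\cdot t^\cup$, and $R\Rightarrow R':=K\bullet(R\to R')$. *)

theory Defs
  imports Main
begin

datatype trm = Var nat | App trm trm | Abs trm

primrec lift :: "trm \<Rightarrow> nat \<Rightarrow> trm" where
  "lift (Var i) k = (if i < k then Var i else Var (Suc i))"
| "lift (App s t) k = App (lift s k) (lift t k)"
| "lift (Abs s) k = Abs (lift s (Suc k))"

primrec subst :: "trm \<Rightarrow> trm \<Rightarrow> nat \<Rightarrow> trm" where
  "subst (Var i) t k = (if k < i then Var (i - 1) else if i = k then t else Var i)"
| "subst (App s u) t k = App (subst s t k) (subst u t k)"
| "subst (Abs s) t k = Abs (subst s (lift t 0) (Suc k))"

inductive beta_eta :: "trm \<Rightarrow> trm \<Rightarrow> bool" where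
  beta: "beta_eta (App (Abs s) t) (subst s t 0)"
| eta: "beta_eta (Abs (App (lift s 0) (Var 0))) s"
| appL: "beta_eta s s' \<Longrightarrow> beta_eta (App s t) (App s' t)"
| appR: "beta_eta t t' \<Longrightarrow> beta_eta (App s t) (App s t')"
| abs: "beta_eta s s' \<Longrightarrow> beta_eta (Abs s) (Abs s')"

definition bequiv :: "trm \<Rightarrow> trm \<Rightarrow> bool" where
  "bequiv = equivclp beta_eta"

type_synonym rel = "trm \<Rightarrow> trm \<Rightarrow> bool"

definition bclosed :: "rel \<Rightarrow> bool" where
  "bclosed r \<longleftrightarrow> (\<forall>t t' u. r t t' \<longrightarrow> bequiv t u \<longrightarrow> r u t') \<and>
                   (\<forall>t t' u. r t t' \<longrightarrow> bequiv t' u \<longrightarrow> r t u)"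

datatype rtyp = TVar nat | Arr rtyp rtyp | All nat rtyp | Conv rtyp | Comp rtyp rtyp | Prom trm

primrec ftv :: "rtyp \<Rightarrow> nat set" where
  "ftv (TVar X) = {X}"
| "ftv (Arr R R') = ftv R \<union> ftv R'"
| "ftv (All X R) = ftv R - {X}"
| "ftv (Conv R) = ftv R"
| "ftv (Comp R R') = ftv R \<union> ftv R'"
| "ftv (Prom t) = {}"

type_synonym env = "nat \<rightharpoonup> rel"

definition wf_env :: "env \<Rightarrow> bool" where
  "wf_env \<gamma> \<longleftrightarrow> finite (dom \<gamma>) \<and> (\<forall>X r. \<gamma> X = Some r \<longrightarrow> bclosed r)"

text \<open>Unbound variables (never occurring under the hypotheses used) get the empty relation.\<close>
primrec interp :: "rtyp \<Rightarrow> env \<Rightarrow> rel" where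
  "interp (TVar X) \<gamma> = (case \<gamma> X of Some r \<Rightarrow> r | None \<Rightarrow> (\<lambda>_ _. False))"
| "interp (Arr R R') \<gamma> = (\<lambda>t t'. \<forall>a a'. interp R \<gamma> a a' \<longrightarrow> interp R' \<gamma> (App t a) (App t' a'))"
| "interp (All X R) \<gamma> = (\<lambda>t t'. \<forall>r. bclosed r \<longrightarrow> interp R (\<gamma>(X \<mapsto> r)) t t')"
| "interp (Conv R) \<gamma> = (\<lambda>t t'. interp R \<gamma> t' t)"
| "interp (Comp R R') \<gamma> = (\<lambda>t t'. \<exists>t''. interp R \<gamma> t t'' \<and> interp R' \<gamma> t'' t')"
| "interp (Prom u) \<gamma> = (\<lambda>t t'. bequiv (App u t) t')"

definition Kc :: trm where "Kc = Abs (Abs (Var 1))"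

definition bullet :: "trm \<Rightarrow> rtyp \<Rightarrow> rtyp" where
  "bullet t R = Comp (Comp (Prom t) R) (Conv (Prom t))"

definition Imp :: "rtyp \<Rightarrow> rtyp \<Rightarrow> rtyp" where
  "Imp R R' = bullet Kc (Arr R R')"

end

theory Submission
  imports Defs
begin

lemma equivclp_cong:
  assumes "equivclp r s s'" and "\<And>x y. r x y \<Longrightarrow> r (f x) (f y)"
  shows "equivclp r (f s) (f s')"
  using assms(1)
proof (induction rule: equivclp_induct)
  case base then show ?case by simp
next
  case (step y z)
  then show ?case
    by (metis assms(2) equivclp_into_equivclp)
qed

lemma bequiv_appL: "bequiv s s' \<Longrightarrow> bequiv (App s t) (App s' t)"
  unfolding bequiv_def by (rule equivclp_cong[where f="\<lambda>x. App x t"]) (auto intro: beta_eta.appL)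

lemma bequiv_appR: "bequiv t t' \<Longrightarrow> bequiv (App s t) (App s t')"
  unfolding bequiv_def by (rule equivclp_cong[where f="\<lambda>x. App s x"]) (auto intro: beta_eta.appR)

lemma bequiv_sym: "bequiv s t \<Longrightarrow> bequiv t s"
  unfolding bequiv_def by (simp add: equivclp_sym)

lemma bequiv_trans: "bequiv s t \<Longrightarrow> bequiv t u \<Longrightarrow> bequiv s u"
  unfolding bequiv_def by (rule equivclp_trans)

lemma subst_lift: "subst (lift t k) a k = t"
  by (induction t arbitrary: k a) auto

lemma K_beta: "bequiv (App (App Kc t) a) t"
proof -
  have 1: "beta_eta (App Kc t) (Abs (lift t 0))"
    unfolding Kc_def using beta_eta.beta[of "Abs (Var 1)" t] by simp
  have 2: "beta_eta (App (Abs (lift t 0)) a) t"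
    using beta_eta.beta[of "lift t 0" a] by (simp add: subst_lift)
  have "beta_eta (App (App Kc t) a) (App (Abs (lift t 0)) a)"
    using 1 by (rule beta_eta.appL)
  then show ?thesis using 2 unfolding bequiv_def
    by (meson r_into_equivclp equivclp_trans)
qed

lemma bclosedI:
  assumes "\<And>t t' u. r t t' \<Longrightarrow> bequiv t u \<Longrightarrow> r u t'"
      and "\<And>t t' u. r t t' \<Longrightarrow> bequiv t' u \<Longrightarrow> r t u"
  shows "bclosed r" using assms unfolding bclosed_def by blast

lemma bclosedD1: "bclosed r \<Longrightarrow> r t t' \<Longrightarrow> bequiv t u \<Longrightarrow> r u t'"
  unfolding bclosed_def by blast

lemma bclosedD2: "bclosed r \<Longrightarrow> r t t' \<Longrightarrow> bequiv t' u \<Longrightarrow> r t u"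
  unfolding bclosed_def by blast

lemma interp_closed:
  "wf_env \<gamma> \<Longrightarrow> ftv R \<subseteq> dom \<gamma> \<Longrightarrow> bclosed (interp R \<gamma>)"
proof (induction R arbitrary: \<gamma>)
  case (TVar X)
  then obtain r where "\<gamma> X = Some r" by auto
  then show ?case using TVar.prems unfolding wf_env_def by auto
next
  case (Arr R1 R2)
  then have c: "bclosed (interp R2 \<gamma>)" by auto
  show ?case unfolding bclosed_def
  proof (intro conjI allI impI)
    fix t t' u assume h: "interp (Arr R1 R2) \<gamma> t t'" "bequiv t u"
    show "interp (Arr R1 R2) \<gamma> u t'"
    proof (simp, intro allI impI)
      fix a a' assume "interp R1 \<gamma> a a'"
      then have "interp R2 \<gamma> (App t a) (App t' a')" using h(1) by simp
      then show "interp R2 \<gamma> (App u a) (App t' a')"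
        using bclosedD1[OF c] bclosedD2[OF c] bequiv_appL[OF h(2)] by blast
    qed
  next
    fix t t' u assume h: "interp (Arr R1 R2) \<gamma> t t'" "bequiv t' u"
    show "interp (Arr R1 R2) \<gamma> t u"
    proof (simp, intro allI impI)
      fix a a' assume "interp R1 \<gamma> a a'"
      then have "interp R2 \<gamma> (App t a) (App t' a')" using h(1) by simp
      then show "interp R2 \<gamma> (App t a) (App u a')"
        using bclosedD1[OF c] bclosedD2[OF c] bequiv_appL[OF h(2)] by blast
    qed
  qed
next
  case (All X R)
  have "\<And>r. bclosed r \<Longrightarrow> bclosed (interp R (\<gamma>(X \<mapsto> r)))"
  proof -
    fix r assume that: "bclosed r"
    show "bclosed (interp R (\<gamma>(X \<mapsto> r)))"
  proof (rule All.IH)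
    show "wf_env (\<gamma>(X \<mapsto> r))"
    proof -
      have "dom (\<gamma>(X \<mapsto> r)) = insert X (dom \<gamma>)" by simp
      moreover have "\<forall>Y s. (\<gamma>(X \<mapsto> r)) Y = Some s \<longrightarrow> bclosed s"
      proof (intro allI impI)
        fix Y s assume "(\<gamma>(X \<mapsto> r)) Y = Some s"
        then show "bclosed s" using All.prems(1) that unfolding wf_env_def
          by (cases "Y = X") auto
      qed
      ultimately show ?thesis using All.prems(1) unfolding wf_env_def by simp
    qed
    show "ftv R \<subseteq> dom (\<gamma>(X \<mapsto> r))" using All.prems(2) by auto
  qed
  qed
  then show ?case
  proof (intro bclosedI)
    fix t t' u assume h: "interp (All X R) \<gamma> t t'" "bequiv t u"
    show "interp (All X R) \<gamma> u t'"
    proof (simp, intro allI impI)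
      fix r assume "bclosed r"
      then show "interp R (\<gamma>(X \<mapsto> r)) u t'"
        using bclosedD1[OF \<open>\<And>r. bclosed r \<Longrightarrow> bclosed (interp R (\<gamma>(X \<mapsto> r)))\<close>[OF \<open>bclosed r\<close>] _ h(2)] h(1) \<open>bclosed r\<close> by simp
    qed
  next
    fix t t' u assume h: "interp (All X R) \<gamma> t t'" "bequiv t' u"
    show "interp (All X R) \<gamma> t u"
    proof (simp, intro allI impI)
      fix r assume "bclosed r"
      then show "interp R (\<gamma>(X \<mapsto> r)) t u"
        using bclosedD2[OF \<open>\<And>r. bclosed r \<Longrightarrow> bclosed (interp R (\<gamma>(X \<mapsto> r)))\<close>[OF \<open>bclosed r\<close>] _ h(2)] h(1) \<open>bclosed r\<close> by simp
    qed
  qed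
next
  case (Conv R)
  then have "bclosed (interp R \<gamma>)" by auto
  then have c: "bclosed (interp R \<gamma>)" .
  show ?case
  proof (rule bclosedI)
    fix t t' u assume "interp (Conv R) \<gamma> t t'" "bequiv t u"
    then show "interp (Conv R) \<gamma> u t'" using bclosedD2[OF c, of t' t u] by simp
  next
    fix t t' u assume "interp (Conv R) \<gamma> t t'" "bequiv t' u"
    then show "interp (Conv R) \<gamma> t u" using bclosedD1[OF c, of t' t u] by simp
  qed
next
  case (Comp R1 R2)
  then have c1: "bclosed (interp R1 \<gamma>)" and c2: "bclosed (interp R2 \<gamma>)" by auto
  show ?case
  proof (rule bclosedI)
    fix t t' u assume h: "interp (Comp R1 R2) \<gamma> t t'" "bequiv t u"
    then obtain m where m: "interp R1 \<gamma> t m" "interp R2 \<gamma> m t'" by auto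
    have "interp R1 \<gamma> u m" using bclosedD1[OF c1 m(1) h(2)] .
    then show "interp (Comp R1 R2) \<gamma> u t'" using m(2) by auto
  next
    fix t t' u assume h: "interp (Comp R1 R2) \<gamma> t t'" "bequiv t' u"
    then obtain m where m: "interp R1 \<gamma> t m" "interp R2 \<gamma> m t'" by auto
    have "interp R2 \<gamma> m u" using bclosedD2[OF c2 m(2) h(2)] .
    then show "interp (Comp R1 R2) \<gamma> t u" using m(1) by auto
  qed
next
  case (Prom u)
  show ?case
  proof (rule bclosedI)
    fix t t' w assume h: "interp (Prom u) \<gamma> t t'" "bequiv t w"
    have "bequiv (App u w) (App u t)" using bequiv_appR[OF bequiv_sym[OF h(2)]] .
    moreover have "bequiv (App u t) t'" using h(1) by simp
    ultimately show "interp (Prom u) \<gamma> w t'" using bequiv_trans by simp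
  next
    fix t t' w assume h: "interp (Prom u) \<gamma> t t'" "bequiv t' w"
    have "bequiv (App u t) t'" using h(1) by simp
    then show "interp (Prom u) \<gamma> t w" using bequiv_trans[OF _ h(2)] by simp
  qed
qed

theorem mainTheorem18:
  assumes "wf_env \<gamma>" and "ftv R \<union> ftv R' \<subseteq> dom \<gamma>"
  shows "interp (Imp R R') \<gamma> t1 t2 \<longleftrightarrow> (\<forall>x x'. interp R \<gamma> x x' \<longrightarrow> interp R' \<gamma> t1 t2)"
proof -
  have c: "bclosed (interp R' \<gamma>)" using assms interp_closed by auto
  have cl1: "interp R' \<gamma> a b" if "interp R' \<gamma> a' b" "bequiv a' a" for a a' b
    using bclosedD1[OF c that] .
  have cl2: "interp R' \<gamma> a b" if "interp R' \<gamma> a b'" "bequiv b' b" for a b b'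
    using bclosedD2[OF c that] .
  have I: "interp (Imp R R') \<gamma> t1 t2 \<longleftrightarrow>
      (\<exists>u v. bequiv (App Kc t1) u \<and> interp (Arr R R') \<gamma> u v \<and> bequiv (App Kc t2) v)"
    unfolding Imp_def bullet_def by auto
  show ?thesis
  proof
    assume "interp (Imp R R') \<gamma> t1 t2"
    then obtain u v where uv: "bequiv (App Kc t1) u" "interp (Arr R R') \<gamma> u v"
      "bequiv (App Kc t2) v" using I by blast
    show "\<forall>x x'. interp R \<gamma> x x' \<longrightarrow> interp R' \<gamma> t1 t2"
    proof (intro allI impI)
      fix x x' assume "interp R \<gamma> x x'"
      then have "interp R' \<gamma> (App u x) (App v x')" using uv(2) by simp
      moreover have "bequiv (App u x) t1"
        using bequiv_trans[OF bequiv_appL[OF bequiv_sym[OF uv(1)]] K_beta] .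
      moreover have "bequiv (App v x') t2"
        using bequiv_trans[OF bequiv_appL[OF bequiv_sym[OF uv(3)]] K_beta] .
      ultimately show "interp R' \<gamma> t1 t2" using cl1 cl2 by metis
    qed
  next
    assume H: "\<forall>x x'. interp R \<gamma> x x' \<longrightarrow> interp R' \<gamma> t1 t2"
    have refl: "bequiv s s" for s unfolding bequiv_def by simp
    have "interp (Arr R R') \<gamma> (App Kc t1) (App Kc t2)"
    proof (simp, intro allI impI)
      fix a a' assume "interp R \<gamma> a a'"
      then have "interp R' \<gamma> t1 t2" using H by blast
      then show "interp R' \<gamma> (App (App Kc t1) a) (App (App Kc t2) a')"
        using cl1[OF cl2[OF _ bequiv_sym[OF K_beta]] bequiv_sym[OF K_beta]] by blast
    qed
    then show "interp (Imp R R') \<gamma> t1 t2" using I refl by blast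
  qed
qed

end
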